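(* Let $(\lambda_n)_{n\ge0}$ be an increasing sequence of non-negative real numbers tending to infinity and let $(c_n)_{n\ge0}$ be complex numbers satisfying $$\sum_{\lambda_n\le x}\lambda_n|c_n|=O(x)\quad(x\to\infty).$$ Then $\sum_{n=0}^\infty c_n$ is $(\mathrm{L},\{\lambda_n\})$ summable (to $\ell$) if and only if it is $(\gamma,\{\lambda_n\},1)$ summable (to $\ell$).
   Context: Let $\gamma_1(x)=\frac{\sin x}{x}$ ($\gamma_1(0)=1$). The series $\sum c_n$ is $(\gamma,\{\lambda_n\},1)$ summable to $\ell$ if $\sum_{n=0}^\infty c_n\gamma_1(\lambda_nh)$ converges for all sufficiently small $h>0$ and $\lim_{h\to0^+}\sum_{n=0}^\infty c_n\gamma_1(\lambda_nh)=\ell$. It is $(\mathrm{L},\{\lambda_n\})$ summable to $\ell$ if it is $(\gamma,\{\lambda_n\},1)$ summable to $\ell$ and in addition $\sum_{\lambda_n>0}c_n\frac{e^{i\lambda_nh}}{\lambda_nh}$ converges for all sufficiently small $|h|>0$. *)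

theory Defs
  imports "HOL-Analysis.Analysis" "HOL-Library.Landau_Symbols"
begin

definition gamma1 :: "real \<Rightarrow> real" where
  "gamma1 x = (if x = 0 then 1 else sin x / x)"

definition gamma_summable :: "(nat \<Rightarrow> complex) \<Rightarrow> (nat \<Rightarrow> real) \<Rightarrow> complex \<Rightarrow> bool" where
  "gamma_summable c lam l \<longleftrightarrow>
     (\<exists>h0>0. \<forall>h. 0 < h \<and> h < h0 \<longrightarrow>
        summable (\<lambda>n. c n * complex_of_real (gamma1 (lam n * h)))) \<and>
     ((\<lambda>h. \<Sum>n. c n * complex_of_real (gamma1 (lam n * h))) \<longlongrightarrow> l) (at_right 0)"

definition L_summable :: "(nat \<Rightarrow> complex) \<Rightarrow> (nat \<Rightarrow> real) \<Rightarrow> complex \<Rightarrow> bool" where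
  "L_summable c lam l \<longleftrightarrow>
     gamma_summable c lam l \<and>
     (\<exists>h0>0. \<forall>h. 0 < \<bar>h\<bar> \<and> \<bar>h\<bar> < h0 \<longrightarrow>
        summable (\<lambda>n. if lam n > 0
                        then c n * exp (\<i> * complex_of_real (lam n * h)) / complex_of_real (lam n * h)
                        else 0))"

end

theory Submission
  imports Defs
begin

lemma key_term:
  fixes a x :: real and K :: nat
  assumes a: "a > 0" and xa: "x \<ge> a" and xK: "x \<le> a * 2^K"
  shows "1/x^2 \<le> 4 * (\<Sum>k<Suc K. if x \<le> a*2^k then 1/(a^2*4^k) else 0)"
proof -
  define k0 where "k0 = (LEAST k. x \<le> a*2^k)"
  have k0: "x \<le> a*2^k0" unfolding k0_def by (rule LeastI[of _ K]) (rule xK)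
  have k0K: "k0 \<le> K" unfolding k0_def by (rule Least_le) (rule xK)
  have small: "a*2^k0 \<le> 2*x"
  proof (cases k0)
    case 0 then show ?thesis using xa a by simp
  next
    case (Suc j)
    have "\<not> x \<le> a*2^j" using Suc k0_def not_less_Least[of j "\<lambda>k. x \<le> a*2^k"] by simp
    then show ?thesis using Suc by simp
  qed
  have pos: "a*2^k0 > 0" using a by simp
  have "(a*2^k0)^2 \<le> (2*x)^2" using small pos by (intro power_mono) auto
  moreover have "(2::real)^k0 * 2^k0 = 4^k0" by (simp add: power_mult_distrib[symmetric])
  ultimately have "a^2*4^k0 \<le> 4*x^2" by (simp add: power2_eq_square algebra_simps)
  hence "1/x^2 \<le> 4 * (1/(a^2*4^k0))" using a xa by (simp add: field_simps)
  also have "1/(a^2*4^k0) \<le> (\<Sum>k<Suc K. if x \<le> a*2^k then 1/(a^2*4^k) else 0)"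
    using member_le_sum[of k0 "{..<Suc K}" "\<lambda>k. if x \<le> a*2^k then 1/(a^2*4^k) else (0::real)"]
      k0 k0K by auto
  finally show ?thesis by simp
qed

lemma abs_summable:
  fixes lam :: "nat \<Rightarrow> real" and c :: "nat \<Rightarrow> complex"
  assumes sm: "strict_mono lam" and nn: "\<And>n. lam n \<ge> 0" and lim: "filterlim lam at_top sequentially"
    and O: "(\<lambda>x::real. \<Sum>n\<in>{n. lam n \<le> x}. lam n * norm (c n)) \<in> O(\<lambda>x. x)"
  shows "summable (\<lambda>n. if lam n > 0 then norm (c n) / lam n else 0)"
proof -
  define S where "S x = (\<Sum>n\<in>{n. lam n \<le> x}. lam n * norm (c n))" for x
  have fin: "finite {n. lam n \<le> x}" for x
  proof -
    from lim have "eventually (\<lambda>n. lam n > x) sequentially" by (simp add: filterlim_at_top_dense)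
    then obtain N where N: "\<forall>n\<ge>N. lam n > x" by (auto simp: eventually_sequentially)
    have "{n. lam n \<le> x} \<subseteq> {..<N}" using N by (auto simp: not_less[symmetric])
    thus ?thesis using finite_subset by blast
  qed
  have Snn: "S x \<ge> 0" for x by (simp add: S_def sum_nonneg nn)
  have Smono: "S x \<le> S y" if "x \<le> y" for x y
    unfolding S_def by (rule sum_mono2) (use fin that nn in auto)
  from O obtain C where C: "C > 0" "eventually (\<lambda>x. norm (S x) \<le> C * norm x) at_top"
    unfolding S_def[abs_def] by (elim landau_o.bigE) auto
  then obtain x0 where x0: "\<And>x. x \<ge> x0 \<Longrightarrow> norm (S x) \<le> C * norm x"
    by (auto simp: eventually_at_top_linorder)
  define D where "D = S x0"
  have D: "D \<ge> 0" using Snn D_def by simp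
  have Sb: "S x \<le> C * x + D" if "x \<ge> 0" for x
  proof (cases "x \<ge> x0")
    case True
    then have "S x \<le> C * x" using x0[of x] that by simp
    then show ?thesis using D by simp
  next
    case False
    then have "S x \<le> D" using Smono D_def by simp
    moreover have "C * x \<ge> 0" using C that by simp
    ultimately show ?thesis by linarith
  qed
  define a where "a = lam 1"
  have a: "a > 0" using sm nn[of 0] unfolding a_def strict_mono_def
  proof -
    have "lam 0 < lam 1" using sm by (simp add: strict_mono_def)
    then show "0 < lam 1" using nn[of 0] by linarith
  qed
  have la: "lam (Suc n) \<ge> a" for n unfolding a_def using sm by (simp add: strict_mono_less_eq)
  define g where "g n = norm (c (Suc n)) / lam (Suc n)" for n
  define B where "B = 8 * (C / a + D / a^2)"
  have "summable g"
  proof (rule summableI_nonneg_bounded)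
    show "0 \<le> g n" for n unfolding g_def using nn by simp
    fix N
    obtain K where K: "lam N / a < 2^K" using real_arch_pow[of 2 "lam N / a"] by auto
    have lK: "lam (Suc n) \<le> a * 2^K" if "n < N" for n
    proof -
      have "lam (Suc n) \<le> lam N" using that sm by (simp add: strict_mono_less_eq)
      also have "\<dots> \<le> a * 2^K" using K a by (simp add: field_simps)
      finally show ?thesis .
    qed
    define w where "w k = 1/(a^2*4^k)" for k :: nat
    define T where "T k = (\<Sum>n<N. if lam (Suc n) \<le> a*2^k then lam (Suc n) * norm (c (Suc n)) else 0)" for k
    have "sum g {..<N} \<le> (\<Sum>n<N. lam (Suc n) * norm (c (Suc n)) * (4*(\<Sum>k<Suc K. if lam (Suc n) \<le> a*2^k then w k else 0)))"
    proof (rule sum_mono)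
      fix n assume "n \<in> {..<N}"
      hence n: "n < N" by simp
      have l: "lam (Suc n) > 0" using la[of n] a by simp
      have "g n = lam (Suc n) * norm (c (Suc n)) * (1 / lam (Suc n)^2)"
        unfolding g_def using l by (simp add: power2_eq_square field_simps)
      also have "\<dots> \<le> lam (Suc n) * norm (c (Suc n)) * (4*(\<Sum>k<Suc K. if lam (Suc n) \<le> a*2^k then w k else 0))"
        unfolding w_def using key_term[OF a la[of n] lK[OF n]] l by (intro mult_left_mono) auto
      finally show "g n \<le> \<dots>" .
    qed
    also have "\<dots> = (\<Sum>n<N. 4 * (\<Sum>k<Suc K. if lam (Suc n) \<le> a*2^k then w k * (lam (Suc n) * norm (c (Suc n))) else 0))"
      by (rule sum.cong[OF refl]) (simp add: sum_distrib_left if_distrib mult_ac del: sum.lessThan_Suc cong: if_cong)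
    also have "\<dots> = 4 * (\<Sum>n<N. \<Sum>k<Suc K. if lam (Suc n) \<le> a*2^k then w k * (lam (Suc n) * norm (c (Suc n))) else 0)"
      by (rule sum_distrib_left[symmetric])
    also have "\<dots> = 4 * (\<Sum>k<Suc K. \<Sum>n<N. if lam (Suc n) \<le> a*2^k then w k * (lam (Suc n) * norm (c (Suc n))) else 0)"
      by (subst sum.swap) (rule refl)
    also have "\<dots> = 4 * (\<Sum>k<Suc K. w k * T k)"
      unfolding T_def by (simp add: sum_distrib_left if_distrib cong: if_cong)
    also have "\<dots> \<le> 4 * (\<Sum>k<Suc K. w k * (C * (a*2^k) + D))"
    proof -
      have "T k \<le> C * (a*2^k) + D" for k
      proof -
        have "T k = (\<Sum>n\<in>{n\<in>{..<N}. lam (Suc n) \<le> a*2^k}. lam (Suc n) * norm (c (Suc n)))"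
          unfolding T_def by (subst sum.inter_filter) auto
        also have "\<dots> = (\<Sum>n\<in>Suc ` {n\<in>{..<N}. lam (Suc n) \<le> a*2^k}. lam n * norm (c n))"
          by (simp add: sum.reindex)
        also have "\<dots> \<le> S (a*2^k)" unfolding S_def
          by (rule sum_mono2) (use fin nn in auto)
        also have "\<dots> \<le> C * (a*2^k) + D" using Sb a by simp
        finally show ?thesis .
      qed
      moreover have "w k \<ge> 0" for k unfolding w_def by simp
      ultimately show ?thesis by (intro mult_left_mono sum_mono) auto
    qed
    also have "\<dots> \<le> 4 * (\<Sum>k<Suc K. (C/a + D/a^2) * (1/2)^k)"
    proof -
      have "w k * (C * (a*2^k) + D) \<le> (C/a + D/a^2) * (1/2)^k" for k
      proof -
        have e: "(4::real)^k = 2^k * 2^k" by (simp add: power_mult_distrib[symmetric])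
        have "w k * (C * (a*2^k) + D) = (C/a) * (1/2)^k + (D/a^2) * (1/4)^k"
          unfolding w_def using a by (simp add: field_simps power_divide power2_eq_square e)
        also have "(D/a^2) * (1/4)^k \<le> (D/a^2) * (1/2)^k"
          using D by (intro mult_left_mono power_mono) auto
        finally show ?thesis by (simp add: algebra_simps)
      qed
      then show ?thesis by (intro mult_left_mono sum_mono) auto
    qed
    also have "\<dots> = 4 * (C/a + D/a^2) * (\<Sum>k<Suc K. (1/2)^k)"
      by (simp only: sum_distrib_left mult.assoc)
    also have "\<dots> \<le> 4 * (C/a + D/a^2) * 2"
    proof -
      have "(\<Sum>k<Suc K. (1/2::real)^k) \<le> (\<Sum>k. (1/2::real)^k)"
        by (rule sum_le_suminf) (auto intro: summable_geometric)
      also have "\<dots> = 2" using suminf_geometric[of "1/2::real"] by simp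
      finally show ?thesis using a C D by (intro mult_left_mono) auto
    qed
    finally show "sum g {..<N} \<le> B" unfolding B_def by simp
  qed
  moreover have "(if lam (Suc n) > 0 then norm (c (Suc n)) / lam (Suc n) else 0) = g n" for n
    using la[of n] a unfolding g_def by simp
  ultimately show ?thesis by (subst summable_Suc_iff[symmetric]) simp
qed

theorem proposition2p1:
  fixes lam :: "nat \<Rightarrow> real" and c :: "nat \<Rightarrow> complex"
  assumes "strict_mono lam"
    and "\<And>n. lam n \<ge> 0"
    and "filterlim lam at_top sequentially"
    and "(\<lambda>x::real. \<Sum>n\<in>{n. lam n \<le> x}. lam n * norm (c n)) \<in> O(\<lambda>x. x)"
  shows "L_summable c lam l \<longleftrightarrow> gamma_summable c lam l"
proof
  assume "L_summable c lam l" thus "gamma_summable c lam l" by (simp add: L_summable_def)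
next
  assume g: "gamma_summable c lam l"
  have s: "summable (\<lambda>n. if lam n > 0 then norm (c n) / lam n else 0)"
    by (rule abs_summable[OF assms])
  have "summable (\<lambda>n. if lam n > 0
                        then c n * exp (\<i> * complex_of_real (lam n * h)) / complex_of_real (lam n * h)
                        else 0)" if h: "h \<noteq> 0" for h
  proof (rule summable_comparison_test[OF _ summable_mult2[OF s, of "1/\<bar>h\<bar>"]])
    show "\<exists>N. \<forall>n\<ge>N. norm (if lam n > 0
                        then c n * exp (\<i> * complex_of_real (lam n * h)) / complex_of_real (lam n * h)
                        else 0) \<le> (if lam n > 0 then norm (c n) / lam n else 0) * (1/\<bar>h\<bar>)"
    proof (intro exI allI impI)
      fix n
      show "norm (if lam n > 0
                        then c n * exp (\<i> * complex_of_real (lam n * h)) / complex_of_real (lam n * h)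
                        else 0) \<le> (if lam n > 0 then norm (c n) / lam n else 0) * (1/\<bar>h\<bar>)"
      proof (cases "lam n > 0")
        case True
        have "norm (c n * exp (\<i> * complex_of_real (lam n * h)) / complex_of_real (lam n * h))
              = norm (c n) / (lam n * \<bar>h\<bar>)"
          using True by (simp add: norm_divide norm_mult abs_mult)
        then show ?thesis using True by simp
      qed simp
    qed
  qed
  then show "L_summable c lam l" using g unfolding L_summable_def
    by (intro conjI exI[of _ 1]) auto
qed

end
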